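(* Let $N>1$ be an integer, $a\in\mathbb{R}$ with $|a|<1$, and $x_n=n/N$ for $n=0,\dots,N$. Let $g:[0,\infty)\to\mathbb{R}$ be bounded, with $g(x)=g(x-1)$ for all $x>1$, such that (1) $g$ is continuous on each of the intervals $[x_0,x_1],(x_1,x_2],\dots,(x_{N-1},x_N]$, and (2) the right limit $g(\tfrac nN+)$ exists for $n=1,\dots,N-1$. Let $f(x)=\sum_{k=0}^\infty a^kg(N^kx)$ for $x\ge0$; this is the solution of $f(x)-af(Nx)=g(x)$. Then $f$ interpolates the data $\{(x_n,y_n)\}_{n=0}^N$, where $$y_0=\frac{g(0)}{1-a},\qquad y_N=\frac{g(1)}{1-a},\qquad y_n=g(x_n)+\frac{a}{1-a}g(1)\ (n=1,\dots,N-1).$$ Moreover, the closure of the graph of $f$ restricted to $[0,1]$ is the unique attractor of the IFS $W=([0,1]\times\mathbb{R};w_1,\dots,w_N)$, where $w_n(x,y)=(L_n(x),ay+g_n(x))$, $L_n(x)=(x+n-1)/N$, and $$g_n(x)=\begin{cases} g(L_n(x)) & \text{if } 0<x<1,\\ g\!\left(\frac{n-1}{N}+\right) & \text{if } x=0,\\ g\!\left(\frac nN\right) & \text{if } x=1.\end{cases}$$ If in addition (3) $g(\tfrac nN+)-g(\tfrac nN)=\frac{a}{1-a}\big(g(1)-g(0)\big)$ for $n=1,\dots,N-1$, then $f$ is continuous on $[0,1]$ and the graph of $f$ restricted to $[0,1]$ is the unique attractor of this IFS.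
   Context: For $n=1$, $g(0+)$ means the right limit at $0$ (equal to $g(0)$ by (1)). The attractor of the IFS $W$ is the unique nonempty compact set $A\subseteq[0,1]\times\mathbb{R}$ with $A=\bigcup_{n=1}^N w_n(A)$. *)

theory Defs
  imports "HOL-Analysis.Analysis"
begin

definition right_lim :: "(real \<Rightarrow> real) \<Rightarrow> real \<Rightarrow> real" where
  "right_lim g x = Lim (at_right x) g"

definition Lmap :: "nat \<Rightarrow> nat \<Rightarrow> real \<Rightarrow> real" where
  "Lmap N n x = (x + real n - 1) / real N"

definition gfun :: "(real \<Rightarrow> real) \<Rightarrow> nat \<Rightarrow> nat \<Rightarrow> real \<Rightarrow> real" where
  "gfun g N n x =
     (if 0 < x \<and> x < 1 then g (Lmap N n x)
      else if x = 0 then right_lim g ((real n - 1) / real N)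
      else g (real n / real N))"

definition wmap :: "(real \<Rightarrow> real) \<Rightarrow> nat \<Rightarrow> real \<Rightarrow> nat \<Rightarrow> real \<times> real \<Rightarrow> real \<times> real" where
  "wmap g N a n p = (Lmap N n (fst p), a * snd p + gfun g N n (fst p))"

definition is_attractor :: "nat \<Rightarrow> (nat \<Rightarrow> real \<times> real \<Rightarrow> real \<times> real) \<Rightarrow> (real \<times> real) set \<Rightarrow> bool" where
  "is_attractor N w A \<longleftrightarrow> A \<noteq> {} \<and> compact A \<and> A \<subseteq> {0..1} \<times> UNIV \<and>
     A = (\<Union>n\<in>{1..N}. w n ` A)"

definition unique_attractor :: "nat \<Rightarrow> (nat \<Rightarrow> real \<times> real \<Rightarrow> real \<times> real) \<Rightarrow> (real \<times> real) set \<Rightarrow> bool" where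
  "unique_attractor N w A \<longleftrightarrow> is_attractor N w A \<and> (\<forall>B. is_attractor N w B \<longrightarrow> B = A)"

end

theory Submission imports Defs begin

lemma fiber_contract:
  fixes S T :: "(real \<times> real) set" and w :: "nat \<Rightarrow> real \<times> real \<Rightarrow> real \<times> real"
    and I :: "nat set" and c :: real
  assumes T: "compact T" and S: "bounded S"
    and SW: "S \<subseteq> (\<Union>n\<in>I. w n ` S)" and TW: "\<And>n. n \<in> I \<Longrightarrow> w n ` T \<subseteq> T"
    and fstST: "fst ` S \<subseteq> fst ` T"
    and fw: "\<And>n x y y'. n \<in> I \<Longrightarrow> fst (w n (x,y)) = fst (w n (x,y'))"
    and sw: "\<And>n x y y'. n \<in> I \<Longrightarrow> \<bar>snd (w n (x,y)) - snd (w n (x,y'))\<bar> \<le> c * \<bar>y - y'\<bar>"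
    and c: "0 \<le> c" "c < 1"
  shows "S \<subseteq> T"
proof -
  define F where "F x = {y. (x,y) \<in> T}" for x
  have Fclosed: "closed (F x)" for x
  proof -
    have "F x = (\<lambda>y. (x,y)) -` T" by (auto simp: F_def)
    moreover have "closed ((\<lambda>y. (x,y)) -` T)"
      by (rule continuous_closed_vimage) (auto intro!: continuous_intros simp: T compact_imp_closed)
    ultimately show ?thesis by simp
  qed
  have Fne: "F (fst p) \<noteq> {}" if "p \<in> S" for p
  proof -
    from fstST that obtain q where "q \<in> T" "fst q = fst p" by force
    then have "snd q \<in> F (fst p)" by (cases q) (auto simp: F_def)
    then show ?thesis by auto
  qed
  define h where "h p = infdist (snd p) (F (fst p))" for p
  obtain B1 where B1: "\<And>p. p \<in> S \<Longrightarrow> norm p \<le> B1" using S bounded_iff by blast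
  obtain B2 where B2: "\<And>p. p \<in> T \<Longrightarrow> norm p \<le> B2" using compact_imp_bounded[OF T] bounded_iff by blast
  have hb: "h p \<le> B1 + B2" if "p \<in> S" for p
  proof -
    from fstST that obtain q where q: "q \<in> T" "fst q = fst p" by force
    then have "snd q \<in> F (fst p)" by (cases q) (auto simp: F_def)
    then have "h p \<le> dist (snd p) (snd q)" unfolding h_def by (rule infdist_le)
    also have "\<dots> \<le> norm (snd p) + norm (snd q)" by (simp add: dist_norm norm_triangle_ineq4)
    also have "\<dots> \<le> B1 + B2"
      using B1[OF that] B2[OF q(1)] norm_snd_le[of "snd p" "fst p"] norm_snd_le[of "snd q" "fst q"]
      by simp
    finally show ?thesis .
  qed
  have step: "\<exists>q\<in>S. h p \<le> c * h q" if "p \<in> S" for p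
  proof -
    from SW that obtain n q where n: "n \<in> I" and q: "q \<in> S" and pq: "p = w n q" by blast
    obtain z where z: "z \<in> F (fst q)" and zmin: "\<And>y. y \<in> F (fst q) \<Longrightarrow> dist (snd q) z \<le> dist (snd q) y"
      using distance_attains_inf[OF Fclosed Fne[OF q]] by blast
    have hq: "h q = dist (snd q) z"
    proof (rule antisym)
      show "h q \<le> dist (snd q) z" unfolding h_def by (rule infdist_le[OF z])
      show "dist (snd q) z \<le> h q" unfolding h_def infdist_notempty[OF Fne[OF q]]
        by (rule cINF_greatest[OF Fne[OF q]]) (rule zmin)
    qed
    have "(fst q, z) \<in> T" using z by (simp add: F_def)
    then have wT: "w n (fst q, z) \<in> T" using TW[OF n] by blast
    have "fst (w n (fst q, z)) = fst p" using fw[OF n, of "fst q" z "snd q"] pq by simp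
    then have "snd (w n (fst q, z)) \<in> F (fst p)" using wT by (simp add: F_def)
      (metis prod.collapse)
    then have "h p \<le> dist (snd p) (snd (w n (fst q, z)))" unfolding h_def by (rule infdist_le)
    also have "\<dots> = \<bar>snd (w n (fst q, snd q)) - snd (w n (fst q, z))\<bar>"
      using pq by (simp add: dist_real_def)
    also have "\<dots> \<le> c * \<bar>snd q - z\<bar>" by (rule sw[OF n])
    also have "\<dots> = c * h q" by (simp add: hq dist_real_def)
    finally show ?thesis using q by blast
  qed
  show ?thesis
  proof
    fix p assume p: "p \<in> S"
    define D where "D = (SUP p\<in>S. h p)"
    have bdd: "bdd_above (h ` S)" using hb by (auto intro!: bdd_aboveI)
    have hD: "h p' \<le> D" if "p' \<in> S" for p'
      unfolding D_def by (rule cSUP_upper[OF that bdd])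
    have "D \<le> c * D" unfolding D_def
    proof (rule cSUP_least)
      show "S \<noteq> {}" using p by auto
      fix p' assume "p' \<in> S"
      then obtain q where "q \<in> S" "h p' \<le> c * h q" using step by blast
      moreover have "c * h q \<le> c * D" using hD[OF \<open>q \<in> S\<close>] c by (simp add: mult_left_mono)
      ultimately show "h p' \<le> c * (SUP p\<in>S. h p)" unfolding D_def by linarith
    qed
    moreover have "0 \<le> h p" unfolding h_def by (rule infdist_nonneg)
    ultimately have "h p \<le> 0" using hD[OF p] c
      by (smt (verit, ccfv_threshold) mult_le_cancel_right1)
    then have "h p = 0" using \<open>0 \<le> h p\<close> by simp
    then have "snd p \<in> F (fst p)" unfolding h_def
      using in_closed_iff_infdist_zero[OF Fclosed Fne[OF p]] by simp
    then show "p \<in> T" by (simp add: F_def)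
  qed
qed

lemma cover:
  fixes N :: nat and x :: real
  assumes N: "N > 1" and x: "0 < x" "x \<le> 1"
  shows "\<exists>n\<in>{1..N}. \<exists>t. 0 < t \<and> t \<le> 1 \<and> Lmap N n t = x"
proof -
  have Npos: "real N > 0" using N by simp
  define c where "c = \<lceil>real N * x\<rceil>"
  have c1: "of_int c - 1 < real N * x" "real N * x \<le> of_int c"
    using ceiling_eq_iff[of "real N * x" c] by (auto simp: c_def)
  have cpos: "c \<ge> 1" using c1 Npos x by (smt (verit) mult_pos_pos of_int_le_0_iff)
  have cle: "c \<le> int N" unfolding c_def using x Npos
    by (simp add: ceiling_le_iff mult_left_le)
  define n where "n = nat c"
  have rn: "real n = of_int c" using cpos by (simp add: n_def)
  define t where "t = real N * x - real n + 1"
  have "n \<in> {1..N}" using cpos cle by (auto simp: n_def)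
  moreover have "0 < t" "t \<le> 1" using c1 rn by (auto simp: t_def)
  moreover have "Lmap N n t = x" using Npos by (simp add: Lmap_def t_def)
  ultimately show ?thesis by blast
qed

theorem theorem4p2:
  fixes N :: nat and a :: real and g f :: "real \<Rightarrow> real"
  assumes N: "N > 1"
    and a: "\<bar>a\<bar> < 1"
    and bdd: "bounded (g ` {0..})"
    and per: "\<And>x. x > 1 \<Longrightarrow> g x = g (x - 1)"
    and cont0: "continuous_on {0 .. 1 / real N} g"
    and cont: "\<And>n. n \<in> {1..N-1} \<Longrightarrow> continuous_on {real n / real N <.. (real n + 1) / real N} g"
    and rlim: "\<And>n. n \<in> {1..N-1} \<Longrightarrow> \<exists>L. (g \<longlongrightarrow> L) (at_right (real n / real N))"
    and f_def: "f = (\<lambda>x. \<Sum>k. a ^ k * g (real N ^ k * x))"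
  shows "f 0 = g 0 / (1 - a)
       \<and> f 1 = g 1 / (1 - a)
       \<and> (\<forall>n\<in>{1..N-1}. f (real n / real N) = g (real n / real N) + a / (1 - a) * g 1)
       \<and> unique_attractor N (wmap g N a) (closure ((\<lambda>x. (x, f x)) ` {0..1}))
       \<and> ((\<forall>n\<in>{1..N-1}. right_lim g (real n / real N) - g (real n / real N)
                          = a / (1 - a) * (g 1 - g 0))
          \<longrightarrow> continuous_on {0..1} f
              \<and> unique_attractor N (wmap g N a) ((\<lambda>x. (x, f x)) ` {0..1}))"
proof -
  have Npos: "real N > 0" and N1: "real N > 1" using N by auto
  have a1: "a < 1" "a \<noteq> 1" "1 - a \<noteq> 0" using a by auto
  from bdd obtain B where B: "\<forall>y\<in>g ` {0..}. norm y \<le> B" by (auto simp: bounded_iff)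
  have gB: "\<bar>g x\<bar> \<le> B" if "x \<ge> 0" for x using B that by auto
  have per_nat: "g (y + real j) = g y" if "y > 0" for y j
  proof (induction j)
    case 0 then show ?case by simp
  next
    case (Suc j)
    have "g (y + real (Suc j)) = g (y + real (Suc j) - 1)" by (rule per) (use that in simp)
    also have "\<dots> = g (y + real j)" by simp
    finally show ?case using Suc by simp
  qed
  have g_nat: "g (real m) = g 1" if "m \<ge> 1" for m
    using per_nat[of 1 "m - 1"] that by (simp add: of_nat_diff)
  have geo: "summable (\<lambda>k. B * \<bar>a\<bar> ^ k)" using a by (intro summable_mult summable_geometric) simp
  have tb: "norm (a ^ k * g (real N ^ k * x)) \<le> B * \<bar>a\<bar> ^ k" if "x \<ge> 0" for k x
  proof -
    have "\<bar>g (real N ^ k * x)\<bar> \<le> B" using gB that by simp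
    then have "\<bar>a\<bar> ^ k * \<bar>g (real N ^ k * x)\<bar> \<le> \<bar>a\<bar> ^ k * B" by (simp add: mult_left_mono)
    then show ?thesis by (simp add: abs_mult power_abs mult.commute)
  qed
  have summ: "summable (\<lambda>k. a ^ k * g (real N ^ k * x))" if "x \<ge> 0" for x
    by (rule summable_comparison_test'[OF geo]) (rule tb[OF that])
  have feq: "f x = g x + a * f (real N * x)" if "x \<ge> 0" for x
  proof -
    have s: "summable (\<lambda>k. a ^ k * g (real N ^ k * x))" by (rule summ[OF that])
    have s2: "summable (\<lambda>k. a ^ k * g (real N ^ k * (real N * x)))" by (rule summ) (use that Npos in simp)
    have "(\<Sum>k. a ^ (Suc k) * g (real N ^ (Suc k) * x)) = f x - g x"
      using suminf_split_head[OF s] by (simp add: f_def)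
    moreover have "(\<Sum>k. a ^ (Suc k) * g (real N ^ (Suc k) * x)) = a * f (real N * x)"
      using suminf_mult[OF s2, of a] by (simp add: f_def mult_ac)
    ultimately show ?thesis by simp
  qed
  have fper: "f (x + real j) = f x" if "x > 0" for x j
  proof -
    have "g (real N ^ k * (x + real j)) = g (real N ^ k * x)" for k
    proof -
      have "real N ^ k * (x + real j) = real N ^ k * x + real (N ^ k * j)" by (simp add: distrib_left)
      moreover have "real N ^ k * x > 0" using that Npos by simp
      ultimately show ?thesis using per_nat[of "real N ^ k * x" "N ^ k * j"] by simp
    qed
    then show ?thesis by (simp add: f_def)
  qed
  have geosumm: "summable (\<lambda>k. a ^ k)" using a by (intro summable_geometric) simp
  have geosum: "(\<Sum>k. a ^ k) = 1 / (1 - a)" using a by (intro suminf_geometric) simp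
  have f_const: "(\<Sum>k. a ^ k * c) = c / (1 - a)" for c
    using suminf_mult2[OF geosumm, of c] geosum by simp
  have f0: "f 0 = g 0 / (1 - a)" using f_const[of "g 0"] by (simp add: f_def)
  have f_nat: "f (real m) = g 1 / (1 - a)" if "m \<ge> 1" for m
  proof -
    have "g (real N ^ k * real m) = g 1" for k
    proof -
      have "real N ^ k * real m = real (N ^ k * m)" by simp
      moreover have "N ^ k * m \<ge> 1" using that N by (simp add: Suc_le_eq)
      ultimately show ?thesis using g_nat by metis
    qed
    then show ?thesis using f_const[of "g 1"] by (simp add: f_def)
  qed
  have f1: "f 1 = g 1 / (1 - a)" using f_nat[of 1] by simp
  have fn: "f (real n / real N) = g (real n / real N) + a / (1 - a) * g 1" if "n \<in> {1..N-1}" for n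
  proof -
    have "f (real n / real N) = g (real n / real N) + a * f (real N * (real n / real N))"
      by (rule feq) (use Npos in simp)
    also have "real N * (real n / real N) = real n" using Npos by simp
    also have "f (real n) = g 1 / (1 - a)" using that by (intro f_nat) auto
    finally show ?thesis by simp
  qed
  have gr0: "((\<lambda>u. g (c * u)) \<longlongrightarrow> g 0) (at_right 0)" if "c > 0" for c
  proof -
    have "continuous_on {0..1 / (real N * c)} (\<lambda>u. g (c * u))"
    proof (rule continuous_on_compose2[OF cont0])
      show "continuous_on {0..1 / (real N * c)} ((*) c)" by (intro continuous_intros)
      show "(*) c ` {0..1 / (real N * c)} \<subseteq> {0..1 / real N}"
        using that Npos by (auto simp: field_simps)
    qed
    from continuous_on_Icc_at_rightD[OF this] show ?thesis using that Npos by simp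
  qed
  have fr0: "(f \<longlongrightarrow> f 0) (at_right 0)"
  proof -
    have lim: "((\<lambda>u. a ^ k * g (real N ^ k * u)) \<longlongrightarrow> a ^ k * g 0) (at_right 0)" for k
      by (intro tendsto_mult_left gr0) (use Npos in simp)
    have bound: "eventually (\<lambda>(k, u). norm (a ^ k * g (real N ^ k * u)) \<le> B * \<bar>a\<bar> ^ k)
        (at_top \<times>\<^sub>F at_right (0::real))"
      unfolding eventually_prod_filter
    proof (intro exI conjI allI impI)
      show "eventually (\<lambda>_. True) (at_top::nat filter)" by simp
      show "eventually (\<lambda>u. u > (0::real)) (at_right 0)" by (rule eventually_at_right_less)
      fix k :: nat and u :: real assume "u > 0"
      then show "(\<lambda>(k, u). norm (a ^ k * g (real N ^ k * u)) \<le> B * \<bar>a\<bar> ^ k) (k, u)"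
        using tb[of u k] by simp
    qed
    have "((\<lambda>u. \<Sum>k. a ^ k * g (real N ^ k * u)) \<longlongrightarrow> (\<Sum>k. a ^ k * g 0)) (at_right 0)"
      using tannerys_theorem[OF lim bound geo] by simp
    then show ?thesis by (simp add: f_def)
  qed
  have pc: "continuous_on {real m / real N <.. (real m + 1) / real N} g" if mN: "m < N" for m
  proof (cases "m = 0")
    case True
    then show ?thesis by (auto intro: continuous_on_subset[OF cont0])
  next
    case False
    then have "m \<in> {1..N-1}" using mN by auto
    then show ?thesis using cont[of m] by simp
  qed
  have rl0: "right_lim g 0 = g 0" and gr00: "(g \<longlongrightarrow> g 0) (at_right 0)"
  proof -
    show g0: "(g \<longlongrightarrow> g 0) (at_right 0)" using continuous_on_Icc_at_rightD[OF cont0] Npos by simp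
    then show "right_lim g 0 = g 0" unfolding right_lim_def by (intro tendsto_Lim) simp_all
  qed
  have pr: "(g \<longlongrightarrow> right_lim g (real m / real N)) (at_right (real m / real N))" if mN: "m < N" for m
  proof (cases "m = 0")
    case True
    then show ?thesis using rl0 gr00 by simp
  next
    case False
    then have "m \<in> {1..N-1}" using mN by auto
    then obtain L where L: "(g \<longlongrightarrow> L) (at_right (real m / real N))" using rlim[of m] by blast
    moreover have "right_lim g (real m / real N) = L" unfolding right_lim_def
      by (intro tendsto_Lim L) simp
    ultimately show ?thesis by simp
  qed
  define P where "P m t = (if t = real m / real N then right_lim g (real m / real N) else g t)" for m t
  have Pc: "continuous_on {real m / real N .. (real m + 1) / real N} (P m)" if "m < N" for m
  proof -
    define c where "c = real m / real N"
    define d where "d = (real m + 1) / real N"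
    have cd: "c < d" using Npos by (simp add: c_def d_def divide_strict_right_mono)
    have "continuous_on {c..d} (P m)"
    proof (rule continuous_on_IccI)
      have "eventually (\<lambda>t. g t = P m t) (at_right c)"
        using eventually_at_right_less[of c] by eventually_elim (auto simp: P_def c_def)
      then show "(P m \<longlongrightarrow> P m c) (at_right c)"
        using Lim_transform_eventually[OF pr[OF that]] by (simp add: P_def c_def)
    next
      have "continuous_on {(c + d) / 2 .. d} g" by (rule continuous_on_subset[OF pc[OF that]]) (use cd in \<open>auto simp: c_def d_def\<close>)
      then have "(g \<longlongrightarrow> g d) (at_left d)" by (rule continuous_on_Icc_at_leftD) (use cd in simp)
      moreover have "eventually (\<lambda>t. g t = P m t) (at_left d)"
        using eventually_at_left_real[OF cd] by eventually_elim (auto simp: P_def c_def)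
      ultimately have "(P m \<longlongrightarrow> g d) (at_left d)" by (rule Lim_transform_eventually)
      moreover have "P m d = g d" using cd by (simp add: P_def c_def)
      ultimately show "(P m \<longlongrightarrow> P m d) (at_left d)" by simp
    next
      fix x assume x: "c < x" "x < d"
      have "continuous_on {c<..<d} g" by (rule continuous_on_subset[OF pc[OF that]]) (auto simp: c_def d_def)
      then have "isCont g x" using x by (simp add: continuous_on_eq_continuous_at)
      then have "(g \<longlongrightarrow> g x) (at x)" by (simp add: isCont_def)
      moreover have "eventually (\<lambda>t. g t = P m t) (at x)"
      proof -
        have ev: "eventually (\<lambda>t. t \<in> {c<..}) (at x)" by (rule eventually_at_in_open') (use x in auto)
        then show ?thesis by eventually_elim (auto simp: P_def c_def)
      qed
      ultimately have "(P m \<longlongrightarrow> g x) (at x)" by (rule Lim_transform_eventually)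
      then show "(P m \<longlongrightarrow> P m x) (at x)" using x by (simp add: P_def c_def)
    next
      show "c < d" by (rule cd)
    qed
    then show ?thesis by (simp add: c_def d_def)
  qed
  have gfun_eq: "gfun g N n u = P (n - 1) (Lmap N n u)" if n: "n \<in> {1..N}" and u: "u \<in> {0..1}" for n u
  proof -
    have cc: "real (n - 1) / real N = (real n - 1) / real N" using n by (simp add: of_nat_diff)
    have Ld: "Lmap N n u - real (n - 1) / real N = u / real N"
      unfolding cc Lmap_def using Npos by (simp add: field_simps)
    consider "u = 0" | "0 < u \<and> u < 1" | "u = 1" using u by fastforce
    then show ?thesis
    proof cases
      case 1
      then have L: "Lmap N n u = real (n - 1) / real N" using Ld by simp
      have "gfun g N n u = right_lim g ((real n - 1) / real N)" using 1 by (simp add: gfun_def)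
      also have "\<dots> = right_lim g (real (n - 1) / real N)" by (simp only: cc)
      also have "\<dots> = P (n - 1) (Lmap N n u)" unfolding L P_def by simp
      finally show ?thesis .
    next
      case 2
      then have "Lmap N n u \<noteq> real (n - 1) / real N" using Ld Npos by auto
      then have "P (n - 1) (Lmap N n u) = g (Lmap N n u)" by (simp add: P_def)
      moreover have "gfun g N n u = g (Lmap N n u)" using 2 by (simp add: gfun_def)
      ultimately show ?thesis by simp
    next
      case 3
      then have "Lmap N n u \<noteq> real (n - 1) / real N" using Ld Npos by auto
      then have "P (n - 1) (Lmap N n u) = g (Lmap N n u)" by (simp add: P_def)
      moreover have "Lmap N n u = real n / real N" using 3 by (simp add: Lmap_def)
      moreover have "gfun g N n u = g (real n / real N)" using 3 by (simp add: gfun_def)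
      ultimately show ?thesis by simp
    qed
  qed
  have gfc: "continuous_on {0..1} (gfun g N n)" if n: "n \<in> {1..N}" for n
  proof -
    have rn: "real (n - 1) = real n - 1" using n by (simp add: of_nat_diff)
    have Pn: "continuous_on {real (n - 1) / real N .. (real (n - 1) + 1) / real N} (P (n - 1))"
      by (rule Pc) (use n in auto)
    have "continuous_on {0..1} (\<lambda>u. P (n - 1) (Lmap N n u))"
    proof (rule continuous_on_compose2[OF Pn])
      show "continuous_on {0..1} (Lmap N n)" unfolding Lmap_def by (intro continuous_intros) (use N in simp)
      show "Lmap N n ` {0..1} \<subseteq> {real (n - 1) / real N .. (real (n - 1) + 1) / real N}"
      proof
        fix v assume "v \<in> Lmap N n ` {0..1}"
        then obtain u where u: "u \<in> {0..1}" and v: "v = Lmap N n u" by auto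
        have v': "v = (real (n - 1) + u) / real N" unfolding v Lmap_def rn by (simp add: algebra_simps)
        have "real (n - 1) / real N \<le> v" unfolding v' using u Npos by (intro divide_right_mono) auto
        moreover have "v \<le> (real (n - 1) + 1) / real N" unfolding v' using u Npos by (intro divide_right_mono) auto
        ultimately show "v \<in> {real (n - 1) / real N .. (real (n - 1) + 1) / real N}" by simp
      qed
    qed
    then show ?thesis by (rule continuous_on_eq) (simp add: gfun_eq[OF n])
  qed
  have wc: "continuous_on ({0..1} \<times> UNIV) (wmap g N a n)" if n: "n \<in> {1..N}" for n
  proof -
    have h0: "continuous_on ({0..1} \<times> UNIV) (\<lambda>p. gfun g N n (fst p))"
      by (rule continuous_on_compose2[OF gfc[OF n] continuous_on_fst[OF continuous_on_id]]) auto
    have h1: "continuous_on ({0..1::real} \<times> (UNIV::real set)) (\<lambda>p. Lmap N n (fst p))"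
      unfolding Lmap_def by (intro continuous_intros) (use N in simp)
    have h2: "continuous_on ({0..1} \<times> UNIV) (\<lambda>p. a * snd p + gfun g N n (fst p))"
      by (intro continuous_on_add continuous_on_mult_left continuous_on_snd continuous_on_id h0)
    show ?thesis unfolding wmap_def using continuous_on_Pair[OF h1 h2] by simp
  qed
  define K where "K = (\<Sum>k. B * \<bar>a\<bar> ^ k)"
  have fK: "\<bar>f x\<bar> \<le> K" if "x \<ge> 0" for x
  proof -
    have sn: "summable (\<lambda>k. norm (a ^ k * g (real N ^ k * x)))"
      by (rule summable_comparison_test'[OF geo]) (rule order_trans[OF _ tb[OF that]], simp)
    have "\<bar>f x\<bar> \<le> (\<Sum>k. norm (a ^ k * g (real N ^ k * x)))"
      unfolding f_def using summable_norm[OF sn] by simp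
    also have "\<dots> \<le> K" unfolding K_def by (rule suminf_le[OF _ sn geo]) (rule tb[OF that])
    finally show ?thesis .
  qed
  define G where "G = (\<lambda>x. (x, f x)) ` {0..1::real}"
  define C where "C = closure G"
  have GsubK: "G \<subseteq> {0..1} \<times> {-K..K}"
  proof
    fix p assume "p \<in> G"
    then obtain x where x: "x \<in> {0..1}" and p: "p = (x, f x)" by (auto simp: G_def)
    then have "\<bar>f x\<bar> \<le> K" using fK by auto
    then show "p \<in> {0..1} \<times> {-K..K}" using x p by (auto simp: abs_le_iff)
  qed
  have bG: "bounded G" by (rule bounded_subset[OF bounded_Times GsubK]) auto
  have compC: "compact C" unfolding C_def using bG by simp
  have closedC: "closed C" unfolding C_def by simp
  have GC: "G \<subseteq> C" unfolding C_def by (rule closure_subset)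
  have Csub: "C \<subseteq> {0..1} \<times> UNIV" unfolding C_def
    by (rule closure_minimal) (auto simp: G_def intro: closed_Times)
  have Lrng: "0 < Lmap N n t \<and> Lmap N n t \<le> 1" if n: "n \<in> {1..N}" and t: "0 < t" "t \<le> 1" for n t
  proof -
    have "real n \<le> real N" "1 \<le> real n" using n by auto
    then show ?thesis using t Npos by (auto simp: Lmap_def field_simps)
  qed
  have WG1: "wmap g N a n (t, f t) = (Lmap N n t, f (Lmap N n t))"
    if n: "n \<in> {1..N}" and t: "0 < t" "t \<le> 1" for n t
  proof -
    have Lpos: "Lmap N n t \<ge> 0" using Lrng[OF n t] by simp
    have NL: "real N * Lmap N n t = t + real (n - 1)" using n Npos by (simp add: Lmap_def of_nat_diff)
    have "f (Lmap N n t) = g (Lmap N n t) + a * f (t + real (n - 1))" using feq[OF Lpos] NL by simp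
    also have "f (t + real (n - 1)) = f t" using fper t by simp
    finally have eq: "f (Lmap N n t) = g (Lmap N n t) + a * f t" .
    show ?thesis
    proof (cases "t < 1")
      case True then show ?thesis using t eq by (simp add: wmap_def gfun_def)
    next
      case False then have "t = 1" using t by auto
      then show ?thesis using eq by (simp add: wmap_def gfun_def Lmap_def)
    qed
  qed
  have WGC: "wmap g N a n (x, f x) \<in> C" if n: "n \<in> {1..N}" and x: "x \<in> {0..1}" for n x
  proof (cases "x = 0")
    case False
    then have x': "0 < x" "x \<le> 1" using x by auto
    have "(Lmap N n x, f (Lmap N n x)) \<in> G" using Lrng[OF n x'] by (auto simp: G_def)
    then show ?thesis using WG1[OF n x'] GC by auto
  next
    case True
    have ev: "eventually (\<lambda>u. u \<in> {0<..<1}) (at_right (0::real))"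
      by (rule eventually_at_right_real) simp
    have "((\<lambda>u. wmap g N a n (u, f u)) \<longlongrightarrow> wmap g N a n (0, f 0)) (at_right 0)"
    proof (rule continuous_on_tendsto_compose[OF wc[OF n]])
      show "((\<lambda>u. (u, f u)) \<longlongrightarrow> (0, f 0)) (at_right 0)"
        by (intro tendsto_Pair tendsto_ident_at fr0)
      show "(0::real, f 0) \<in> {0..1} \<times> UNIV" by simp
      show "eventually (\<lambda>u. (u, f u) \<in> {0..1} \<times> UNIV) (at_right (0::real))"
        using ev by eventually_elim auto
    qed
    moreover have "eventually (\<lambda>u. wmap g N a n (u, f u) \<in> C) (at_right (0::real))"
      using ev
    proof eventually_elim
      case (elim u)
      then have u: "0 < u" "u \<le> 1" by auto
      have "(Lmap N n u, f (Lmap N n u)) \<in> G" using Lrng[OF n u] by (auto simp: G_def)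
      then show ?case using WG1[OF n u] GC by auto
    qed
    ultimately have "wmap g N a n (0, f 0) \<in> C"
      by (intro Lim_in_closed_set[OF closedC]) simp_all
    then show ?thesis using True by simp
  qed
  have WC: "wmap g N a n ` C \<subseteq> C" if n: "n \<in> {1..N}" for n
    unfolding C_def
  proof (rule image_closure_subset)
    show "continuous_on (closure G) (wmap g N a n)"
      using continuous_on_subset[OF wc[OF n] Csub] by (simp add: C_def)
    show "closed (closure G)" by simp
    show "wmap g N a n ` G \<subseteq> closure G" using WGC[OF n] by (auto simp: G_def C_def)
  qed
  have GW: "G \<subseteq> (\<Union>n\<in>{1..N}. wmap g N a n ` G)"
  proof
    fix p assume "p \<in> G"
    then obtain x where x: "x \<in> {0..1}" and p: "p = (x, f x)" by (auto simp: G_def)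
    show "p \<in> (\<Union>n\<in>{1..N}. wmap g N a n ` G)"
    proof (cases "x = 0")
      case True
      have "wmap g N a 1 (0, f 0) = (0, f 0)"
        using feq[of 0] by (simp add: wmap_def gfun_def Lmap_def rl0)
      moreover have "(0, f 0) \<in> G" by (auto simp: G_def)
      moreover have "1 \<in> {1..N}" using N by simp
      ultimately show ?thesis using p True by (metis (no_types, lifting) UN_iff image_eqI)
    next
      case False
      then obtain n t where n: "n \<in> {1..N}" and t: "0 < t" "t \<le> 1" and L: "Lmap N n t = x"
        using cover[OF N, of x] x by auto
      have "(t, f t) \<in> G" using t by (auto simp: G_def)
      then have "wmap g N a n (t, f t) \<in> wmap g N a n ` G" by blast
      then show ?thesis using WG1[OF n t] L p n by auto
    qed
  qed
  have compW: "compact (\<Union>n\<in>{1..N}. wmap g N a n ` C)"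
  proof (rule compact_UN)
    show "finite {1..N}" by simp
    fix n assume n: "n \<in> {1..N}"
    show "compact (wmap g N a n ` C)"
      by (rule compact_continuous_image[OF continuous_on_subset[OF wc[OF n] Csub] compC])
  qed
  have CW: "C = (\<Union>n\<in>{1..N}. wmap g N a n ` C)"
  proof
    show "(\<Union>n\<in>{1..N}. wmap g N a n ` C) \<subseteq> C" using WC by blast
    have "G \<subseteq> (\<Union>n\<in>{1..N}. wmap g N a n ` C)" using GW GC by blast
    then show "C \<subseteq> (\<Union>n\<in>{1..N}. wmap g N a n ` C)" unfolding C_def
      by (rule closure_minimal) (use compW in \<open>simp add: C_def compact_imp_closed\<close>)
  qed
  have Cne: "C \<noteq> {}" using GC by (auto simp: G_def)
  have attC: "is_attractor N (wmap g N a) C"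
    unfolding is_attractor_def using Cne compC Csub CW by blast
  have fstC: "{0..1} \<subseteq> fst ` C"
  proof
    fix x :: real assume "x \<in> {0..1}"
    then have "(x, f x) \<in> C" using GC by (auto simp: G_def)
    then show "x \<in> fst ` C" by (metis fst_conv image_eqI)
  qed
  have fw: "fst (wmap g N a n (x, y)) = fst (wmap g N a n (x, y'))" for n x y y'
    by (simp add: wmap_def)
  have sw: "\<bar>snd (wmap g N a n (x, y)) - snd (wmap g N a n (x, y'))\<bar> \<le> \<bar>a\<bar> * \<bar>y - y'\<bar>" for n x y y'
    by (simp add: wmap_def abs_mult[symmetric] right_diff_distrib)
  have uniq: "unique_attractor N (wmap g N a) C"
    unfolding unique_attractor_def
  proof (intro conjI allI impI)
    show "is_attractor N (wmap g N a) C" by (rule attC)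
    fix B' assume HB: "is_attractor N (wmap g N a) B'"
    have H: "B' \<noteq> {} \<and> compact B' \<and> B' \<subseteq> {0..1} \<times> UNIV \<and> B' = (\<Union>n\<in>{1..N}. wmap g N a n ` B')"
      using HB unfolding is_attractor_def .
    have Bne: "B' \<noteq> {}" using H by (rule conjunct1)
    have Bc: "compact B'" using H by (rule conjunct2[THEN conjunct1])
    have Bsub: "B' \<subseteq> {0..1} \<times> UNIV" using H by (rule conjunct2[THEN conjunct2, THEN conjunct1])
    have Beq: "B' = (\<Union>n\<in>{1..N}. wmap g N a n ` B')" using H by (rule conjunct2[THEN conjunct2, THEN conjunct2])
    have BW: "wmap g N a n ` B' \<subseteq> B'" if "n \<in> {1..N}" for n
    proof -
      have X: "wmap g N a n ` B' \<subseteq> (\<Union>n\<in>{1..N}. wmap g N a n ` B')" using that by blast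
      show ?thesis using X[unfolded Beq[symmetric]] .
    qed
    have BW': "B' \<subseteq> (\<Union>n\<in>{1..N}. wmap g N a n ` B')" using Beq by (rule equalityD1)
    have fstB: "{0..1} \<subseteq> fst ` B'"
    proof -
      let ?S = "(\<lambda>x. (0::real, x)) ` {0..1::real}"
      let ?T = "(\<lambda>p. (0::real, fst p)) ` B'"
      let ?w = "\<lambda>n (p::real \<times> real). (0::real, Lmap N n (snd p))"
      have h1: "compact ?T" by (rule compact_continuous_image[OF _ Bc]) (intro continuous_intros)
      have h2: "bounded ?S"
        by (rule compact_imp_bounded, rule compact_continuous_image[OF continuous_on_Pair[OF continuous_on_const continuous_on_id] compact_Icc])
      have h3: "?S \<subseteq> (\<Union>n\<in>{1..N}. ?w n ` ?S)"
      proof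
        fix p assume "p \<in> ?S"
        then obtain x where p: "p = (0, x)" and x: "x \<in> {0..1}" by (rule imageE)
        obtain n t where n: "n \<in> {1..N}" and t: "t \<in> {0..1}" and L: "Lmap N n t = x"
        proof (cases "x = 0")
          case True
          have "Lmap N 1 0 = x" using True by (simp add: Lmap_def)
          moreover have "(1::nat) \<in> {1..N}" using N by simp
          ultimately show ?thesis using that[of 1 0] by simp
        next
          case False
          then have "0 < x" "x \<le> 1" using x by auto
          then obtain n t where "n \<in> {1..N}" "0 < t" "t \<le> 1" "Lmap N n t = x"
            using cover[OF N, of x] by blast
          then show ?thesis using that[of n t] by simp
        qed
        have eq: "?w n (0, t) = p" using L p by simp
        have mem: "(0::real, t) \<in> ?S" using t by (rule imageI)
        have "p \<in> ?w n ` ?S" by (rule image_eqI[where f="?w n", OF eq[symmetric] mem])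
        then show "p \<in> (\<Union>n\<in>{1..N}. ?w n ` ?S)" by (rule UN_I[OF n])
      qed
      have h4: "?w n ` ?T \<subseteq> ?T" if n: "n \<in> {1..N}" for n
      proof
        fix q assume "q \<in> ?w n ` ?T"
        then obtain r where qr: "q = ?w n r" and r: "r \<in> ?T" by (rule imageE)
        from r obtain p where rp: "r = (0, fst p)" and p: "p \<in> B'" by (rule imageE)
        have wB: "wmap g N a n p \<in> B'" using BW[OF n] p by (rule subsetD[OF _ imageI])
        have "q = (0, fst (wmap g N a n p))" using qr rp by (simp add: wmap_def)
        moreover have "(0::real, fst (wmap g N a n p)) \<in> ?T" using wB by (rule imageI)
        ultimately show "q \<in> ?T" by simp
      qed
      have h5: "fst ` ?S \<subseteq> fst ` ?T"
      proof
        obtain b where "b \<in> B'" using Bne by blast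
        then have "(0::real, fst b) \<in> ?T" by (rule imageI)
        then have "fst (0::real, fst b) \<in> fst ` ?T" by (rule imageI)
        then have Z: "(0::real) \<in> fst ` ?T" by simp
        have E: "fst ` ?S = (\<lambda>x. 0::real) ` {0..1::real}" by (simp only: image_image fst_conv)
        fix z assume "z \<in> fst ` ?S"
        then have "z \<in> (\<lambda>x. 0::real) ` {0..1::real}" by (simp only: E)
        then have "z = 0" by auto
        then show "z \<in> fst ` ?T" using Z by simp
      qed
      have h6: "fst (?w n (x, y)) = fst (?w n (x, y'))" for n x y y' by simp
      have h7: "\<bar>snd (?w n (x, y)) - snd (?w n (x, y'))\<bar> \<le> 1 / real N * \<bar>y - y'\<bar>" for n x y y'
      proof -
        have "snd (?w n (x, y)) - snd (?w n (x, y')) = (y - y') / real N"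
          using Npos by (simp add: Lmap_def field_simps)
        then show ?thesis by (simp add: abs_divide)
      qed
      have "?S \<subseteq> ?T"
        by (rule fiber_contract[where S="?S" and T="?T" and w="?w" and I="{1..N}" and c="1 / real N",
              OF h1 h2 h3 h4 h5 h6 h7]) (use N1 in auto)
      show ?thesis
      proof
        fix x :: real assume "x \<in> {0..1}"
        then have "(0, x) \<in> ?S" by (rule imageI)
        then have "(0, x) \<in> ?T" using \<open>?S \<subseteq> ?T\<close> by (rule subsetD[rotated])
        then obtain p where px: "(0::real, x) = (0, fst p)" and p: "p \<in> B'" by (rule imageE)
        from px have "x = fst p" by simp
        then show "x \<in> fst ` B'" using p by (rule image_eqI)
      qed
    qed
    have "B' \<subseteq> C"
    proof (rule fiber_contract[where w="wmap g N a" and I="{1..N}" and c="\<bar>a\<bar>", OF compC compact_imp_bounded[OF Bc] BW' WC _ fw sw])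
      have "fst ` B' \<subseteq> {0..1}" using Bsub by force
      then show "fst ` B' \<subseteq> fst ` C" using fstC by blast
    qed (use a in auto)
    moreover have "C \<subseteq> B'"
    proof (rule fiber_contract[where w="wmap g N a" and I="{1..N}" and c="\<bar>a\<bar>", OF Bc compact_imp_bounded[OF compC] _ BW _ fw sw])
      show "C \<subseteq> (\<Union>n\<in>{1..N}. wmap g N a n ` C)" using CW by (rule equalityD1)
      have "fst ` C \<subseteq> {0..1}" using Csub by force
      then show "fst ` C \<subseteq> fst ` B'" using fstB by blast
    qed (use a in auto)
    ultimately show "B' = C" by blast
  qed
  have part3: "(\<forall>n\<in>{1..N-1}. right_lim g (real n / real N) - g (real n / real N)
                          = a / (1 - a) * (g 1 - g 0))
          \<longrightarrow> continuous_on {0..1} f \<and> unique_attractor N (wmap g N a) G"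
  proof
    assume jump: "\<forall>n\<in>{1..N-1}. right_lim g (real n / real N) - g (real n / real N)
                          = a / (1 - a) * (g 1 - g 0)"
    have fc: "continuous_on {0..1} f"
    proof -
      define y0 where "y0 = g 0 / (1 - a)"
      define yN where "yN = g 1 / (1 - a)"
      define lin where "lin t = y0 + (yN - y0) * t" for t
      define Pf where "Pf y = (if y = 0 then 0 else y - real_of_int \<lceil>y\<rceil> + 1)" for y :: real
      define s where "s y = lin (Pf y) - a * lin (Pf (real N * y))" for y
      define Gc where "Gc y = g y - s y" for y
      have Pf_per: "Pf (y + real j) = Pf y" if "y > 0" for y j
      proof -
        have "\<lceil>y + real j\<rceil> = \<lceil>y\<rceil> + int j" using ceiling_add_of_int[of y "int j"] by simp
        then show ?thesis using that by (simp add: Pf_def)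
      qed
      have Pf_id: "Pf y = y" if "0 \<le> y" "y \<le> 1" for y
      proof (cases "y = 0")
        case False
        then have "\<lceil>y\<rceil> = 1" using that by (simp add: ceiling_eq_iff)
        then show ?thesis by (simp add: Pf_def)
      qed (simp add: Pf_def)
      have Pf_rng: "0 \<le> Pf y \<and> Pf y \<le> 1" if "y \<ge> 0" for y
      proof (cases "y = 0")
        case False
        have "of_int \<lceil>y\<rceil> - 1 < y" "y \<le> of_int \<lceil>y\<rceil>"
          using ceiling_eq_iff[of y "\<lceil>y\<rceil>"] by auto
        then show ?thesis using False by (simp add: Pf_def)
      qed (simp add: Pf_def)
      have Pf_nat: "Pf (real m) = 1" if "m \<ge> 1" for m
      proof -
        have "real m \<noteq> 0" using that by simp
        moreover have "\<lceil>real m\<rceil> = int m" by (rule ceiling_of_nat)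
        ultimately show ?thesis by (simp add: Pf_def)
      qed
      have Pf_N: "Pf (real N * Pf y) = Pf (real N * y)" if "y \<ge> 0" for y
      proof (cases "y = 0")
        case False
        then have y: "y > 0" using that by simp
        define m where "m = \<lceil>y\<rceil> - 1"
        have m: "of_int m < y" "y \<le> of_int m + 1"
          using ceiling_eq_iff[of y "\<lceil>y\<rceil>"] by (auto simp: m_def)
        have "-1 < real_of_int m" using m y by linarith
        then have "-1 < m" by linarith
        then have m0: "m \<ge> 0" by linarith
        have Py: "Pf y = y - of_int m" using False by (simp add: Pf_def m_def)
        define j where "j = N * nat m"
        have rj: "real j = real N * of_int m" using m0 by (simp add: j_def)
        have pos: "real N * (y - of_int m) > 0" using m Npos by simp
        have F1: "Pf (real N * (y - of_int m) + real j) = Pf (real N * (y - of_int m))"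
          by (rule Pf_per[OF pos])
        have F2: "real N * (y - of_int m) + real j = real N * y" unfolding rj by (simp add: algebra_simps)
        have "Pf (real N * y) = Pf (real N * (y - of_int m))" using F1 unfolding F2 .
        then show ?thesis unfolding Py by (rule sym)
      qed (simp add: Pf_def)
      define KL where "KL = \<bar>y0\<bar> + \<bar>yN - y0\<bar>"
      have linB: "\<bar>lin t\<bar> \<le> KL" if "0 \<le> t" "t \<le> 1" for t
      proof -
        have "\<bar>(yN - y0) * t\<bar> \<le> \<bar>yN - y0\<bar>" using that by (simp add: abs_mult mult_left_le)
        then show ?thesis unfolding lin_def KL_def by linarith
      qed
      have linPB: "\<bar>lin (Pf y)\<bar> \<le> KL" if "y \<ge> 0" for y using linB Pf_rng[OF that] by simp
      have KL0: "KL \<ge> 0" by (simp add: KL_def)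
      have sB: "\<bar>s y\<bar> \<le> KL + \<bar>a\<bar> * KL" if "y \<ge> 0" for y
      proof -
        have "\<bar>a * lin (Pf (real N * y))\<bar> \<le> \<bar>a\<bar> * KL"
          unfolding abs_mult by (rule mult_left_mono) (use linPB that Npos in auto)
        then show ?thesis using linPB[OF that] unfolding s_def by linarith
      qed
      have sumS: "(\<lambda>k. a ^ k * s (real N ^ k * x)) sums lin x" if x: "x \<in> {0..1}" for x
      proof -
        define F where "F k = a ^ k * lin (Pf (real N ^ k * x))" for k
        have "F \<longlonglongrightarrow> 0"
        proof (rule Lim_null_comparison)
          show "eventually (\<lambda>k. norm (F k) \<le> KL * \<bar>a\<bar> ^ k) sequentially"
          proof (rule always_eventually, rule allI)
            fix k
            have "\<bar>lin (Pf (real N ^ k * x))\<bar> \<le> KL" by (rule linPB) (use x in simp)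
            then have "\<bar>a\<bar> ^ k * \<bar>lin (Pf (real N ^ k * x))\<bar> \<le> \<bar>a\<bar> ^ k * KL"
              by (simp add: mult_left_mono)
            then show "norm (F k) \<le> KL * \<bar>a\<bar> ^ k" by (simp add: F_def abs_mult power_abs mult.commute)
          qed
          have "(\<lambda>k. KL * \<bar>a\<bar> ^ k) \<longlonglongrightarrow> KL * 0"
            by (intro tendsto_mult tendsto_const LIMSEQ_power_zero) (use a in simp)
          then show "(\<lambda>k. KL * \<bar>a\<bar> ^ k) \<longlonglongrightarrow> 0" by simp
        qed
        from telescope_sums'[OF this] have "(\<lambda>k. F k - F (Suc k)) sums (F 0 - 0)" .
        moreover have "F k - F (Suc k) = a ^ k * s (real N ^ k * x)" for k
        proof -
          have "Pf (real N ^ k * x) = Pf (real N ^ k * x)" ..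
          show ?thesis by (simp add: F_def s_def algebra_simps)
        qed
        moreover have "F 0 = lin x" using x by (simp add: F_def Pf_id)
        ultimately show ?thesis by simp
      qed
      have Gc_per: "Gc (z + real j) = Gc z" if "z > 0" for z j
      proof -
        have "Pf (real N * (z + real j)) = Pf (real N * z)"
        proof -
          have "real N * (z + real j) = real N * z + real (N * j)" by (simp add: algebra_simps)
          moreover have "real N * z > 0" using that Npos by simp
          ultimately show ?thesis using Pf_per[of "real N * z" "N * j"] by simp
        qed
        then show ?thesis using per_nat[OF that, of j] Pf_per[OF that, of j] by (simp add: Gc_def s_def)
      qed
      have Gc0: "Gc 0 = 0"
      proof -
        have "Pf 0 = 0" by (simp add: Pf_def)
        then have "Gc 0 = g 0 - (1 - a) * y0" by (simp add: Gc_def s_def lin_def algebra_simps)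
        also have "(1 - a) * y0 = g 0" using a1 by (simp add: y0_def)
        finally show ?thesis by simp
      qed
      have Gc1: "Gc 1 = 0"
      proof -
        have "Pf 1 = 1" "Pf (real N) = 1" using Pf_nat[of 1] Pf_nat[of N] N by auto
        then have "Gc 1 = g 1 - (1 - a) * yN" by (simp add: Gc_def s_def lin_def algebra_simps)
        also have "(1 - a) * yN = g 1" using a1 by (simp add: yN_def)
        finally show ?thesis by simp
      qed
      have Gc_piece: "Gc t = P m t - lin t + a * lin (real N * t - real m)"
        if m: "m < N" and t: "t \<in> {real m / real N .. (real m + 1) / real N}" for m t
      proof -
        have mN: "real m + 1 \<le> real N" using m by simp
        have t0: "0 \<le> t"
        proof -
          have "0 \<le> real m / real N" by simp
          moreover have "real m / real N \<le> t" using t by simp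
          ultimately show ?thesis by linarith
        qed
        have "t \<le> (real m + 1) / real N" using t by simp
        also have "\<dots> \<le> 1" using mN Npos by simp
        finally have t1: "t \<le> 1" .
        have Pft: "Pf t = t" by (rule Pf_id[OF t0 t1])
        show ?thesis
        proof (cases "t = real m / real N")
          case True
          then have Nt: "real N * t = real m" using Npos by simp
          show ?thesis
          proof (cases "m = 0")
            case True
            then show ?thesis using Nt \<open>t = real m / real N\<close> rl0
              by (simp add: Gc_def s_def P_def Pf_def)
          next
            case False
            then have m1: "m \<in> {1..N-1}" using m by auto
            have j: "right_lim g (real m / real N) - g (real m / real N) = a / (1 - a) * (g 1 - g 0)"
              using jump m1 by blast
            have j2: "a / (1 - a) * (g 1 - g 0) = a * (lin 1 - lin 0)"
            proof -
              have "lin 1 - lin 0 = (g 1 - g 0) / (1 - a)"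
                by (simp add: lin_def yN_def y0_def diff_divide_distrib)
              then show ?thesis by simp
            qed
            have "Gc t = g t - lin t + a * lin 1"
              using Nt Pf_nat[of m] False Pft by (simp add: Gc_def s_def)
            moreover have "P m t = right_lim g t" using True by (simp add: P_def)
            moreover have "lin (real N * t - real m) = lin 0" using Nt by simp
            ultimately show ?thesis using j j2 True by (simp add: algebra_simps)
          qed
        next
          case False
          then have tgt: "real m / real N < t" using t by auto
          then have "real m < real N * t" using Npos by (simp add: field_simps)
          moreover have "real N * t \<le> real m + 1" using t Npos by (simp add: field_simps)
          ultimately have "\<lceil>real N * t\<rceil> = int m + 1" by (simp add: ceiling_eq_iff)
          moreover have "real N * t \<noteq> 0" using tgt Npos by (smt (verit) divide_nonneg_nonneg mult_pos_pos of_nat_0_le_iff)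
          ultimately have "Pf (real N * t) = real N * t - real m" by (simp add: Pf_def)
          then show ?thesis using False Pft by (simp add: Gc_def s_def P_def)
        qed
      qed
      have Gc_c01: "continuous_on {0 .. real j / real N} Gc" if "j \<le> N" for j
        using that
      proof (induction j)
        case 0 then show ?case by simp
      next
        case (Suc j)
        then have jN: "j < N" by simp
        have "continuous_on {real j / real N .. (real j + 1) / real N}
               (\<lambda>t. P j t - lin t + a * lin (real N * t - real j))"
          unfolding lin_def by (intro continuous_intros Pc jN)
        then have c2: "continuous_on {real j / real N .. (real j + 1) / real N} Gc"
          by (rule continuous_on_eq) (simp add: Gc_piece[OF jN])
        have c1: "continuous_on {0 .. real j / real N} Gc" using Suc by simp
        have "continuous_on ({0 .. real j / real N} \<union> {real j / real N .. (real j + 1) / real N}) Gc"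
          by (rule continuous_on_closed_Un[OF _ _ c1 c2]) auto
        moreover have "{0 .. real j / real N} \<union> {real j / real N .. (real j + 1) / real N}
                       = {0 .. real (Suc j) / real N}"
        proof -
          have "0 \<le> real j / real N" by simp
          moreover have "real j / real N \<le> (real j + 1) / real N" using Npos by (simp add: divide_right_mono)
          ultimately have "{0 .. real j / real N} \<union> {real j / real N .. (real j + 1) / real N}
                       = {0 .. (real j + 1) / real N}" by (rule ivl_disj_un_two_touch(4))
          then show ?thesis by simp
        qed
        ultimately show ?case by simp
      qed
      have Gc01: "continuous_on {0..1} Gc" using Gc_c01[of N] Npos by simp
      have Gc_shift: "Gc y = Gc (y - real m)" if "y \<in> {real m .. real m + 1}" for y m
      proof (cases "y = real m")
        case False
        then have "y - real m > 0" using that by auto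
        then show ?thesis using Gc_per[of "y - real m" m] by simp
      next
        case True
        show ?thesis
        proof (cases "m = 0")
          case False
          have "Gc (1 + real (m - 1)) = Gc 1" by (rule Gc_per) simp
          then have "Gc (real m) = Gc 1" using False by (simp add: of_nat_diff)
          then show ?thesis using True Gc0 Gc1 by simp
        qed (use True in simp)
      qed
      have Gcm: "continuous_on {0 .. real m} Gc" for m
      proof (induction m)
        case 0 then show ?case by simp
      next
        case (Suc m)
        have "continuous_on {real m .. real m + 1} (\<lambda>y. Gc (y - real m))"
          by (rule continuous_on_compose2[OF Gc01]) (auto intro!: continuous_intros)
        then have c2: "continuous_on {real m .. real m + 1} Gc"
          by (rule continuous_on_eq) (simp add: Gc_shift)
        have "continuous_on ({0 .. real m} \<union> {real m .. real m + 1}) Gc"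
          by (rule continuous_on_closed_Un[OF _ _ Suc c2]) auto
        moreover have "{0 .. real m} \<union> {real m .. real m + 1} = {0 .. real (Suc m)}" by auto
        ultimately show ?case by simp
      qed
      define BG where "BG = B + (KL + \<bar>a\<bar> * KL)"
      have GcB: "\<bar>Gc y\<bar> \<le> BG" if "y \<ge> 0" for y
        using gB[OF that] sB[OF that] unfolding Gc_def BG_def by linarith
      have geoG: "summable (\<lambda>k. BG * \<bar>a\<bar> ^ k)" using a by (intro summable_mult summable_geometric) simp
      have tbG: "norm (a ^ k * Gc (real N ^ k * x)) \<le> BG * \<bar>a\<bar> ^ k" if "x \<ge> 0" for k x
      proof -
        have "\<bar>Gc (real N ^ k * x)\<bar> \<le> BG" using GcB that by simp
        then have "\<bar>a\<bar> ^ k * \<bar>Gc (real N ^ k * x)\<bar> \<le> \<bar>a\<bar> ^ k * BG" by (simp add: mult_left_mono)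
        then show ?thesis by (simp add: abs_mult power_abs mult.commute)
      qed
      have termc: "continuous_on {0..1} (\<lambda>x. a ^ k * Gc (real N ^ k * x))" for k
      proof -
        have "continuous_on {0..1} (\<lambda>x. Gc (real N ^ k * x))"
        proof (rule continuous_on_compose2[OF Gcm[of "N ^ k"]])
          show "continuous_on {0..1} ((*) (real N ^ k))" by (intro continuous_intros)
          show "(*) (real N ^ k) ` {0..1} \<subseteq> {0..real (N ^ k)}"
          proof
            fix v assume "v \<in> (*) (real N ^ k) ` {0..1}"
            then obtain u where v: "v = real N ^ k * u" and u: "u \<in> {0..1}" by (rule imageE)
            have "real N ^ k * u \<le> real N ^ k" using u by (intro mult_left_le) auto
            moreover have "0 \<le> real N ^ k * u" using u by simp
            ultimately show "v \<in> {0..real (N ^ k)}" using v by simp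
          qed
        qed
        then show ?thesis by (intro continuous_intros)
      qed
      define F1 where "F1 x = (\<Sum>k. a ^ k * Gc (real N ^ k * x))" for x
      have F1c: "continuous_on {0..1} F1"
      proof (rule uniform_limit_theorem)
        show "uniform_limit {0..1} (\<lambda>n x. \<Sum>i<n. a ^ i * Gc (real N ^ i * x)) F1 sequentially"
          unfolding F1_def by (rule Weierstrass_m_test[OF _ geoG]) (rule tbG, simp)
        show "\<forall>\<^sub>F n in sequentially. continuous_on {0..1} (\<lambda>x. \<Sum>i<n. a ^ i * Gc (real N ^ i * x))"
          by (intro always_eventually allI continuous_on_sum termc)
      qed simp
      have fdec: "f x = F1 x + lin x" if x: "x \<in> {0..1}" for x
      proof -
        have s1: "summable (\<lambda>k. a ^ k * Gc (real N ^ k * x))"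
          by (rule summable_comparison_test'[OF geoG]) (rule tbG, use x in simp)
        have s2: "summable (\<lambda>k. a ^ k * s (real N ^ k * x))" using sumS[OF x] by (rule sums_summable)
        have "F1 x + lin x = (\<Sum>k. a ^ k * Gc (real N ^ k * x)) + (\<Sum>k. a ^ k * s (real N ^ k * x))"
          using sums_unique[OF sumS[OF x]] by (simp add: F1_def)
        also have "\<dots> = (\<Sum>k. a ^ k * Gc (real N ^ k * x) + a ^ k * s (real N ^ k * x))"
          by (rule suminf_add[OF s1 s2])
        also have "\<dots> = f x" by (simp add: f_def Gc_def algebra_simps)
        finally show ?thesis by simp
      qed
      have "continuous_on {0..1} (\<lambda>x. F1 x + lin x)"
        unfolding lin_def by (intro continuous_intros F1c)
      then show ?thesis by (rule continuous_on_eq) (simp add: fdec)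
    qed
    have "compact G" unfolding G_def
      by (rule compact_continuous_image) (auto intro!: continuous_on_Pair continuous_on_id fc)
    then have "C = G" unfolding C_def by (simp add: compact_imp_closed)
    then show "continuous_on {0..1} f \<and> unique_attractor N (wmap g N a) G" using fc uniq by simp
  qed
  show ?thesis using f0 f1 fn uniq part3 unfolding C_def G_def by blast
qed

end
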